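(* Let $m\ge3$ and let $\lambda\colon[m]\to\mathbb{Z}_2^2$ be a $\mathbb{Z}_2$-characteristic map over $P_m$. Then $\lambda$ is real toric (i.e. the small cover $M(\lambda)$ is a real toric manifold) if and only if either $m=4$ and $\lambda$ is D-J equivalent to $\mathbf a\mathbf b\mathbf a\mathbf b$, or the image of $\lambda$ has exactly three elements. Equivalently, $\lambda$ is real toric unless $\lambda$ is D-J equivalent to $\Lambda_{2k}=\mathbf a\mathbf b\mathbf a\mathbf b\cdots\mathbf a\mathbf b$ (length $2k=m$) with $k\ge3$.
   Context: $P_m$ is the simplicial complex on $[m]$ with facets $\{i,i+1\}$ mod $m$. $\mathbf a=(1,0)^T$, $\mathbf b=(0,1)^T$, $\mathbf c=(1,1)^T$; a $\mathbb{Z}_2$-characteristic map over $P_m$ is a map $\lambda\colon[m]\to\{\mathbf a,\mathbf b,\mathbf c\}$ with $\lambda(i)\ne\lambda(i+1)$ mod $m$, written as a cyclic word; D-J equivalence is composition with an element of $GL(2,\mathbb{Z}_2)$. $\lambda$ is called real toric if there is a complete non-singular fan in $\mathbb{R}^2$ with exactly $m$ rays whose primitive generators $v_1,\dots,v_m\in\mathbb{Z}^2$, listed in cyclic (counterclockwise) order, satisfy: $i\mapsto v_i\bmod 2$ is D-J equivalent to $\lambda$. *)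

theory Defs
  imports "HOL-Analysis.Analysis"
begin

text \<open>Vectors of Z_2^2 are modelled as pairs of booleans (True = 1, False = 0,
  addition = exclusive or). The vertex set [m] of P_m is indexed by 0..m-1,
  and the successor of i is (i+1) mod m.\<close>

type_synonym z2vec = "bool \<times> bool"

definition va :: z2vec where "va = (True, False)"
definition vb :: z2vec where "vb = (False, True)"
definition vc :: z2vec where "vc = (True, True)"

definition char_map :: "nat \<Rightarrow> (nat \<Rightarrow> z2vec) \<Rightarrow> bool" where
  "char_map m lam \<longleftrightarrow>
     (\<forall>i<m. lam i \<in> {va, vb, vc}) \<and> (\<forall>i<m. lam i \<noteq> lam (Suc i mod m))"

definition z2lin :: "bool \<Rightarrow> bool \<Rightarrow> bool \<Rightarrow> bool \<Rightarrow> z2vec \<Rightarrow> z2vec" where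
  "z2lin p q r s x = ((p \<and> fst x) \<noteq> (q \<and> snd x), (r \<and> fst x) \<noteq> (s \<and> snd x))"

text \<open>Elements of GL(2,Z_2): linear maps whose determinant ps - qr is 1.\<close>
definition GL2Z2 :: "(z2vec \<Rightarrow> z2vec) set" where
  "GL2Z2 = {z2lin p q r s | p q r s. (p \<and> s) \<noteq> (q \<and> r)}"

definition dj_equiv :: "nat \<Rightarrow> (nat \<Rightarrow> z2vec) \<Rightarrow> (nat \<Rightarrow> z2vec) \<Rightarrow> bool" where
  "dj_equiv m lam mu \<longleftrightarrow> (\<exists>g\<in>GL2Z2. \<forall>i<m. mu i = g (lam i))"

definition mod2 :: "int \<times> int \<Rightarrow> z2vec" where
  "mod2 v = (odd (fst v), odd (snd v))"

definition det2 :: "int \<times> int \<Rightarrow> int \<times> int \<Rightarrow> int" where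
  "det2 v w = fst v * snd w - snd v * fst w"

definition of_iv :: "int \<times> int \<Rightarrow> real \<times> real" where
  "of_iv v = (real_of_int (fst v), real_of_int (snd v))"

definition cone2 :: "real \<times> real \<Rightarrow> real \<times> real \<Rightarrow> (real \<times> real) set" where
  "cone2 u w = {s *\<^sub>R u + t *\<^sub>R w | s t. s \<ge> 0 \<and> t \<ge> 0}"

text \<open>v_0,...,v_{m-1} are the primitive ray generators, in counterclockwise cyclic
  order, of a complete non-singular fan in R^2 with exactly m rays. The 2-dimensional
  cones are cone(v_i, v_{i+1}); non-singularity together with the counterclockwise
  order means det(v_i, v_{i+1}) = 1; the fan condition is that distinct maximal cones
  have disjoint interiors (so they meet in a common face); completeness is that
  the cones cover R^2.\<close>
definition complete_nonsingular_fan2 :: "nat \<Rightarrow> (nat \<Rightarrow> int \<times> int) \<Rightarrow> bool" where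
  "complete_nonsingular_fan2 m v \<longleftrightarrow>
     (\<forall>i<m. coprime (fst (v i)) (snd (v i))) \<and>
     inj_on v {..<m} \<and>
     (\<forall>i<m. det2 (v i) (v (Suc i mod m)) = 1) \<and>
     (\<Union>i<m. cone2 (of_iv (v i)) (of_iv (v (Suc i mod m)))) = UNIV \<and>
     (\<forall>i<m. \<forall>j<m. i \<noteq> j \<longrightarrow>
        interior (cone2 (of_iv (v i)) (of_iv (v (Suc i mod m)))) \<inter>
        interior (cone2 (of_iv (v j)) (of_iv (v (Suc j mod m)))) = {})"

definition real_toric :: "nat \<Rightarrow> (nat \<Rightarrow> z2vec) \<Rightarrow> bool" where
  "real_toric m lam \<longleftrightarrow>
     (\<exists>v. complete_nonsingular_fan2 m v \<and> dj_equiv m lam (\<lambda>i. mod2 (v i)))"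

definition alt_ab :: "nat \<Rightarrow> z2vec" where
  "alt_ab i = (if even i then va else vb)"

end

theory Submission
  imports Defs
begin


definition rdet :: "real \<times> real \<Rightarrow> real \<times> real \<Rightarrow> real" where
  "rdet x y = fst x * snd y - snd x * fst y"

definition OC :: "real \<times> real \<Rightarrow> real \<times> real \<Rightarrow> (real \<times> real) set" where
  "OC u w = {x. 0 < rdet x w \<and> 0 < rdet u x}"

lemma rdet_add_left: "rdet (x + y) z = rdet x z + rdet y z"
  by (simp add: rdet_def algebra_simps)
lemma rdet_add_right: "rdet z (x + y) = rdet z x + rdet z y"
  by (simp add: rdet_def algebra_simps)
lemma rdet_scale_left: "rdet (c *\<^sub>R x) z = c * rdet x z"
  by (simp add: rdet_def algebra_simps)
lemma rdet_scale_right: "rdet z (c *\<^sub>R x) = c * rdet z x"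
  by (simp add: rdet_def algebra_simps)
lemma rdet_self: "rdet x x = 0" by (simp add: rdet_def)
lemma rdet_swap: "rdet x y = - rdet y x" by (simp add: rdet_def)
lemma rdet_neg_right: "rdet x (- y) = - rdet x y" by (simp add: rdet_def)

lemmas rdet_lin = rdet_add_left rdet_add_right rdet_scale_left rdet_scale_right rdet_self

lemma of_iv_add: "of_iv (a + b) = of_iv a + of_iv b"
  by (simp add: of_iv_def)
lemma of_iv_neg: "of_iv (- a) = - of_iv a"
  by (simp add: of_iv_def)
lemma rdet_of_iv: "rdet (of_iv a) (of_iv b) = of_int (det2 a b)"
  by (simp add: rdet_def of_iv_def det2_def)

lemma cramer: "rdet u w = 1 \<Longrightarrow> x = rdet x w *\<^sub>R u + rdet u x *\<^sub>R w"
  apply (cases x, cases u, cases w)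
  apply (simp add: rdet_def)
  subgoal for a b aa ba ab bb
  proof -
    assume d: "aa * bb - ba * ab = 1"
    have 1: "(a * bb - b * ab) * aa + (aa * b - ba * a) * ab = a * (aa * bb - ba * ab)"
      by (simp add: algebra_simps)
    have 2: "(a * bb - b * ab) * ba + (aa * b - ba * a) * bb = b * (aa * bb - ba * ab)"
      by (simp add: algebra_simps)
    show ?thesis using 1 2 d by simp
  qed
  done

lemma OC_sub_cone: "rdet u w = 1 \<Longrightarrow> OC u w \<subseteq> cone2 u w"
proof
  fix x assume h: "rdet u w = 1" "x \<in> OC u w"
  then have "x = rdet x w *\<^sub>R u + rdet u x *\<^sub>R w" using cramer by blast
  then show "x \<in> cone2 u w" using h(2) unfolding cone2_def OC_def
    by (intro CollectI exI[of _ "rdet x w"] exI[of _ "rdet u x"]) auto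
qed

lemma open_OC: "open (OC u w)"
proof -
  have "OC u w = {x. 0 < rdet x w} \<inter> {x. 0 < rdet u x}" unfolding OC_def by auto
  moreover have "open {x. 0 < rdet x w}" unfolding rdet_def
    by (intro open_Collect_less continuous_intros)
  moreover have "open {x. 0 < rdet u x}" unfolding rdet_def
    by (intro open_Collect_less continuous_intros)
  ultimately show ?thesis by auto
qed

lemma OC_sub_int: "rdet u w = 1 \<Longrightarrow> OC u w \<subseteq> interior (cone2 u w)"
  by (simp add: OC_sub_cone interior_maximal open_OC)

lemma cone_halfplanes: "rdet u w = 1 \<Longrightarrow> x \<in> cone2 u w \<Longrightarrow> rdet x w \<ge> 0 \<and> rdet u x \<ge> 0"
  unfolding cone2_def by (auto simp: rdet_lin rdet_swap[of w u])

lemma open_in_line_empty: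
  assumes "open S" "\<forall>x\<in>S. rdet x p = 0" "p \<noteq> 0"
  shows "S = {}"
proof (rule ccontr)
  assume "S \<noteq> {}"
  then obtain y where y: "y \<in> S" by auto
  then obtain e where e: "e > 0" "ball y e \<subseteq> S" using assms(1) openE by blast
  define q where "q = (snd p, - fst p)"
  have qp: "rdet q p > 0"
  proof -
    have "rdet q p = (fst p)^2 + (snd p)^2" by (simp add: q_def rdet_def power2_eq_square)
    moreover have "fst p \<noteq> 0 \<or> snd p \<noteq> 0" using assms(3) by (cases p) (auto simp: zero_prod_def)
    ultimately show ?thesis by (simp add: sum_power2_gt_zero_iff)
  qed
  define N where "N = norm q"
  have N: "N \<ge> 0" unfolding N_def by simp
  define c where "c = e / (2 * (N + 1))"
  have c: "c > 0" using e N unfolding c_def by simp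
  have "norm (c *\<^sub>R q) = c * N" using c by (simp add: N_def)
  also have "\<dots> < e"
  proof -
    have ne: "N * e \<ge> 0" using N e by simp
    show ?thesis unfolding c_def using N e apply (simp add: field_simps)
      using ne e by linarith
  qed
  finally have "norm (c *\<^sub>R q) < e" .
  then have "y + c *\<^sub>R q \<in> ball y e" by (simp add: dist_norm)
  then have "y + c *\<^sub>R q \<in> S" using e by auto
  then have "rdet (y + c *\<^sub>R q) p = 0" using assms(2) by auto
  moreover have "rdet (y + c *\<^sub>R q) p = c * rdet q p" using assms(2) y by (simp add: rdet_lin)
  ultimately show False using c qp by simp
qed

lemma int_disjoint_sep:
  assumes "\<forall>x\<in>A. rdet x p \<ge> 0" "\<forall>x\<in>B. rdet x p \<le> 0" "p \<noteq> 0"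
  shows "interior A \<inter> interior B = {}"
proof (rule open_in_line_empty[OF _ _ assms(3)])
  show "open (interior A \<inter> interior B)" by auto
  show "\<forall>x\<in>interior A \<inter> interior B. rdet x p = 0"
    using assms(1,2) interior_subset by (metis IntD1 IntD2 antisym subsetD)
qed


definition Cn :: "(nat \<Rightarrow> int \<times> int) \<Rightarrow> nat \<Rightarrow> nat \<Rightarrow> (real \<times> real) set" where
  "Cn v m i = cone2 (of_iv (v i)) (of_iv (v (Suc i mod m)))"

lemma fan_props:
  assumes "complete_nonsingular_fan2 m v"
  shows "\<forall>i<m. coprime (fst (v i)) (snd (v i))" "inj_on v {..<m}"
    "\<forall>i<m. det2 (v i) (v (Suc i mod m)) = 1"
    "(\<Union>i<m. Cn v m i) = UNIV"
    "\<forall>i<m. \<forall>j<m. i \<noteq> j \<longrightarrow> interior (Cn v m i) \<inter> interior (Cn v m j) = {}"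
  using assms unfolding complete_nonsingular_fan2_def Cn_def by auto

lemma fanI:
  assumes "\<forall>i<m. coprime (fst (v i)) (snd (v i))" "inj_on v {..<m}"
    "\<forall>i<m. det2 (v i) (v (Suc i mod m)) = 1"
    "(\<Union>i<m. Cn v m i) = UNIV"
    "\<forall>i<m. \<forall>j<m. i \<noteq> j \<longrightarrow> interior (Cn v m i) \<inter> interior (Cn v m j) = {}"
  shows "complete_nonsingular_fan2 m v"
  using assms unfolding complete_nonsingular_fan2_def Cn_def by auto

lemma det_coprime: "det2 u w = 1 \<Longrightarrow> coprime (fst w) (snd w)"
proof (rule coprimeI)
  fix c assume "det2 u w = 1" "c dvd fst w" "c dvd snd w"
  then have "c dvd fst u * snd w - snd u * fst w" by simp
  then show "is_unit c" using \<open>det2 u w = 1\<close> by (simp add: det2_def)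
qed

lemma small_eps:
  fixes a b :: real
  defines "e \<equiv> 1 / (2 * (\<bar>a\<bar> + \<bar>b\<bar> + 1))"
  shows "e > 0" "\<bar>e * a\<bar> < 1/2" "\<bar>e * b\<bar> < 1/2"
proof -
  have d: "2 * (\<bar>a\<bar> + \<bar>b\<bar> + 1) > 0" by simp
  show "e > 0" unfolding e_def using d by simp
  have "\<bar>e * a\<bar> = \<bar>a\<bar> / (2 * (\<bar>a\<bar> + \<bar>b\<bar> + 1))" unfolding e_def by (simp add: abs_mult)
  also have "\<dots> < 1/2" using d by (simp add: field_simps)
  finally show "\<bar>e * a\<bar> < 1/2" .
  have "\<bar>e * b\<bar> = \<bar>b\<bar> / (2 * (\<bar>a\<bar> + \<bar>b\<bar> + 1))" unfolding e_def by (simp add: abs_mult)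
  also have "\<dots> < 1/2" using d by (simp add: field_simps)
  finally show "\<bar>e * b\<bar> < 1/2" .
qed

lemma cone_sub1: "cone2 u (u + w) \<subseteq> cone2 u w"
proof
  fix x assume "x \<in> cone2 u (u + w)"
  then obtain s t where "s \<ge> 0" "t \<ge> 0" "x = s *\<^sub>R u + t *\<^sub>R (u + w)" unfolding cone2_def by auto
  then have "x = (s + t) *\<^sub>R u + t *\<^sub>R w" "s + t \<ge> 0" by (auto simp: algebra_simps)
  then show "x \<in> cone2 u w" using \<open>t \<ge> 0\<close> unfolding cone2_def by blast
qed

lemma cone_sub2: "cone2 (u + w) w \<subseteq> cone2 u w"
proof
  fix x assume "x \<in> cone2 (u + w) w"
  then obtain s t where "s \<ge> 0" "t \<ge> 0" "x = s *\<^sub>R (u + w) + t *\<^sub>R w" unfolding cone2_def by auto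
  then have "x = s *\<^sub>R u + (s + t) *\<^sub>R w" "s + t \<ge> 0" by (auto simp: algebra_simps)
  then show "x \<in> cone2 u w" using \<open>s \<ge> 0\<close> unfolding cone2_def by blast
qed

lemma cone_split: "cone2 u w \<subseteq> cone2 u (u + w) \<union> cone2 (u + w) w"
proof
  fix x assume "x \<in> cone2 u w"
  then obtain s t where st: "s \<ge> 0" "t \<ge> 0" "x = s *\<^sub>R u + t *\<^sub>R w" unfolding cone2_def by auto
  show "x \<in> cone2 u (u + w) \<union> cone2 (u + w) w"
  proof (cases "s \<ge> t")
    case True
    then have "x = (s - t) *\<^sub>R u + t *\<^sub>R (u + w)" using st by (auto simp: algebra_simps)
    then show ?thesis using True st unfolding cone2_def by (intro UnI1 CollectI exI[of _ "s - t"] exI[of _ t]) auto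
  next
    case False
    then have "x = s *\<^sub>R (u + w) + (t - s) *\<^sub>R w" using st by (auto simp: algebra_simps)
    then show ?thesis using False st unfolding cone2_def by (intro UnI2 CollectI exI[of _ s] exI[of _ "t - s"]) auto
  qed
qed

lemma new_cones_disj:
  assumes "rdet u w = 1"
  shows "interior (cone2 u (u + w)) \<inter> interior (cone2 (u + w) w) = {}"
proof (rule int_disjoint_sep[where p = "u + w"])
  have d1: "rdet u (u + w) = 1" "rdet (u + w) w = 1" using assms by (auto simp: rdet_lin)
  show "\<forall>x\<in>cone2 u (u + w). 0 \<le> rdet x (u + w)" using cone_halfplanes[OF d1(1)] by blast
  show "\<forall>x\<in>cone2 (u + w) w. rdet x (u + w) \<le> 0" using cone_halfplanes[OF d1(2)]
    by (metis neg_le_0_iff_le rdet_swap)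
  show "u + w \<noteq> 0" using d1(1) by (metis rdet_def fst_zero snd_zero mult_zero_right diff_self zero_neq_one)
qed

lemma near_point:
  assumes "det2 a b = 1"
  defines "z \<equiv> \<lambda>e. of_iv a + e *\<^sub>R of_iv b"
  shows "e > 0 \<Longrightarrow> z e \<in> OC (of_iv a) (of_iv b)"
  using assms unfolding OC_def by (simp add: rdet_lin rdet_of_iv)


lemma fan_append:
  assumes fan: "complete_nonsingular_fan2 m v" and m: "m \<ge> 3"
  defines "p \<equiv> v (m - 1) + v 0"
  defines "v' \<equiv> \<lambda>k. if k < m then v k else p"
  shows "complete_nonsingular_fan2 (Suc m) v'"
proof -
  note F = fan_props[OF fan]
  have sm: "Suc (m - 1) = m" "m - 1 < m" using m by auto
  have "det2 (v (m - 1)) (v (Suc (m - 1) mod m)) = 1" using F(3) sm(2) by blast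
  moreover have "Suc (m - 1) mod m = 0" using sm(1) by simp
  ultimately have dlast: "det2 (v (m - 1)) (v 0) = 1" by (simp only:)
  define U where "U = of_iv (v (m - 1))"
  define W where "W = of_iv (v 0)"
  have UW: "rdet U W = 1" unfolding U_def W_def using dlast by (simp add: rdet_of_iv)
  have P: "of_iv p = U + W" unfolding p_def U_def W_def by (simp add: of_iv_add)
  have Clast: "Cn v m (m - 1) = cone2 U W" unfolding Cn_def U_def W_def using sm by simp
  have dp1: "det2 (v (m - 1)) p = 1" "det2 p (v 0) = 1" using dlast unfolding p_def
    by (auto simp: det2_def algebra_simps)
  have Cnew: "Cn v' (Suc m) k = (if k < m - 1 then Cn v m k else if k = m - 1 then cone2 U (U + W) else cone2 (U + W) W)"
    if kk: "k < Suc m" for k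
  proof -
    consider "k < m - 1" | "k = m - 1" | "k = m" using kk by linarith
    then show ?thesis
    proof cases
      case 1
      then have "Suc k mod Suc m = Suc k" "Suc k mod m = Suc k" "Suc k < m" by auto
      then show ?thesis using 1 unfolding Cn_def v'_def by auto
    next
      case 2
      then have "Suc k mod Suc m = m" using m by auto
      then show ?thesis using 2 m unfolding Cn_def v'_def by (auto simp: P U_def)
    next
      case 3
      then show ?thesis using m unfolding Cn_def v'_def by (auto simp: P W_def)
    qed
  qed
  have intsub: "interior (Cn v' (Suc m) k) \<subseteq> interior (Cn v m (min k (m - 1)))" if "k < Suc m" for k
  proof -
    have "Cn v' (Suc m) k \<subseteq> Cn v m (min k (m - 1))"
      using Cnew[OF that] cone_sub1[of U W] cone_sub2[of U W] Clast
      by (auto split: if_splits simp: min_def)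
    then show ?thesis by (rule interior_mono)
  qed
  have pnot: "p \<noteq> v k" if "k < m" for k
  proof
    assume pk: "p = v k"
    show False
    proof (cases "k = m - 1")
      case True
      then have "v 0 = 0" using pk unfolding p_def by simp
      then show False using dlast by (simp add: det2_def)
    next
      case False
      then have k1: "Suc k < m" "Suc k mod m = Suc k" using that by auto
      define q where "q = v (Suc k)"
      have "det2 (v k) (v (Suc k mod m)) = 1" using F(3) that by blast
      then have dkq: "det2 (v k) q = 1" using k1(2) unfolding q_def by (simp only:)
      define a where "a = real_of_int (det2 q (v 0))"
      define b where "b = real_of_int (det2 (v (m - 1)) q)"
      define e where "e = 1 / (2 * (\<bar>a\<bar> + \<bar>b\<bar> + 1))"
      have e: "e > 0" "\<bar>e * a\<bar> < 1/2" "\<bar>e * b\<bar> < 1/2" unfolding e_def by (rule small_eps)+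
      define z where "z = of_iv (v k) + e *\<^sub>R of_iv q"
      have "z \<in> OC (of_iv (v k)) (of_iv q)" unfolding z_def by (rule near_point[OF dkq e(1)])
      then have z1: "z \<in> interior (Cn v m k)" using OC_sub_int[of "of_iv (v k)" "of_iv q"] dkq k1
        unfolding Cn_def q_def by (auto simp: rdet_of_iv)
      have "rdet z W = 1 + e * a" unfolding z_def W_def a_def using pk dp1
        by (simp add: rdet_lin rdet_of_iv)
      moreover have "rdet U z = 1 + e * b" unfolding z_def U_def b_def using pk dp1
        by (simp add: rdet_lin rdet_of_iv)
      ultimately have "z \<in> OC U W" using e unfolding OC_def by auto
      then have z2: "z \<in> interior (Cn v m (m - 1))" using OC_sub_int[OF UW] Clast by auto
      have "m - 1 < m" using m by auto
      then show False using F(5) z1 z2 that False by blast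
    qed
  qed
  show ?thesis
  proof (rule fanI)
    show "\<forall>i<Suc m. coprime (fst (v' i)) (snd (v' i))"
      using F(1) det_coprime[OF dp1(1)] unfolding v'_def by auto
    show "inj_on v' {..<Suc m}"
    proof (rule inj_onI)
      fix x y assume "x \<in> {..<Suc m}" "y \<in> {..<Suc m}" "v' x = v' y"
      then show "x = y" using F(2) pnot unfolding v'_def inj_on_def
        by (auto split: if_splits)
    qed
    show "\<forall>i<Suc m. det2 (v' i) (v' (Suc i mod Suc m)) = 1"
    proof (intro allI impI)
      fix i assume i: "i < Suc m"
      consider "i < m - 1" | "i = m - 1" | "i = m" using i by linarith
      then show "det2 (v' i) (v' (Suc i mod Suc m)) = 1"
      proof cases
        case 1
        then have "Suc i mod Suc m = Suc i" "Suc i mod m = Suc i" "Suc i < m" by auto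
        moreover have "i < m" using 1 by linarith
        then have "det2 (v i) (v (Suc i mod m)) = 1" using F(3) by blast
        ultimately show ?thesis using 1 unfolding v'_def by auto
      next
        case 2
        then have "Suc i mod Suc m = m" using m by auto
        then show ?thesis using 2 m dp1 unfolding v'_def by auto
      next
        case 3
        then show ?thesis using m dp1 unfolding v'_def by auto
      qed
    qed
    show "(\<Union>i<Suc m. Cn v' (Suc m) i) = UNIV"
    proof -
      have "x \<in> (\<Union>i<Suc m. Cn v' (Suc m) i)" for x
      proof -
        obtain k where k: "k < m" "x \<in> Cn v m k" using F(4) by blast
        show ?thesis
        proof (cases "k < m - 1")
          case True
          then show ?thesis using k Cnew[of k] by auto
        next
          case False
          then have "k = m - 1" using k by auto
          then have "x \<in> cone2 U (U + W) \<union> cone2 (U + W) W" using k Clast cone_split[of U W] by auto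
          moreover have "m - 1 < Suc m" by auto
          moreover have "Cn v' (Suc m) m = cone2 (U + W) W" using Cnew[of m] m by auto
          moreover have "Cn v' (Suc m) (m - 1) = cone2 U (U + W)" using Cnew[of "m - 1"] m by auto
          ultimately show ?thesis by (metis (no_types, lifting) UN_iff Un_iff lessI lessThan_iff)
        qed
      qed
      then show ?thesis by auto
    qed
    show "\<forall>i<Suc m. \<forall>j<Suc m. i \<noteq> j \<longrightarrow> interior (Cn v' (Suc m) i) \<inter> interior (Cn v' (Suc m) j) = {}"
    proof (intro allI impI)
      fix i j assume ij: "i < Suc m" "j < Suc m" "i \<noteq> j"
      show "interior (Cn v' (Suc m) i) \<inter> interior (Cn v' (Suc m) j) = {}"
      proof (cases "min i (m - 1) = min j (m - 1)")
        case False
        have "min i (m - 1) < m" "min j (m - 1) < m" using m by auto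
        then have "interior (Cn v m (min i (m - 1))) \<inter> interior (Cn v m (min j (m - 1))) = {}"
          using F(5) False by blast
        then show ?thesis using intsub[OF ij(1)] intsub[OF ij(2)] by blast
      next
        case True
        then have "(i = m - 1 \<and> j = m) \<or> (i = m \<and> j = m - 1)" using ij m by (auto simp: min_def split: if_splits)
        then show ?thesis using Cnew[OF ij(1)] Cnew[OF ij(2)] new_cones_disj[OF UW] m by auto
      qed
    qed
  qed
qed


lemma mod2case: "a < 2 * (m::nat) \<Longrightarrow> a mod m = (if a < m then a else a - m)"
  by (simp add: le_mod_geq)

lemma rot_inj: "(x + s) mod (m::nat) = (y + s) mod m \<Longrightarrow> x < m \<Longrightarrow> y < m \<Longrightarrow> x = y"
proof -
  assume h: "(x + s) mod m = (y + s) mod m" "x < m" "y < m"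
  define t where "t = s mod m"
  have t: "t < m" using h(2) unfolding t_def by simp
  have "(x + t) mod m = (y + t) mod m" using h(1) unfolding t_def by (metis mod_add_right_eq)
  then show "x = y" using mod2case[of "x + t" m] mod2case[of "y + t" m] t h(2,3)
    by (auto split: if_splits)
qed

lemma rot_suc: "(Suc k mod m + s) mod m = Suc ((k + s) mod m) mod (m::nat)"
  by (metis add_Suc mod_Suc_eq mod_add_left_eq)

lemma rot_image: "0 < (m::nat) \<Longrightarrow> (\<lambda>k. (k + s) mod m) ` {..<m} = {..<m}"
  by (rule endo_inj_surj) (auto intro: inj_onI rot_inj)

lemma fan_rot:
  assumes fan: "complete_nonsingular_fan2 m v" and m: "0 < m"
  shows "complete_nonsingular_fan2 m (\<lambda>k. v ((k + s) mod m))"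
proof -
  note F = fan_props[OF fan]
  define r where "r = (\<lambda>k. (k + s) mod m)"
  have rl: "r k < m" for k using m unfolding r_def by simp
  have Cr: "Cn (\<lambda>k. v ((k + s) mod m)) m k = Cn v m (r k)" for k
    unfolding Cn_def r_def rot_suc by simp
  show ?thesis
  proof (rule fanI)
    show "\<forall>i<m. coprime (fst (v ((i + s) mod m))) (snd (v ((i + s) mod m)))" using F(1) m by simp
    show "inj_on (\<lambda>k. v ((k + s) mod m)) {..<m}"
      using F(2) rot_inj m unfolding inj_on_def by (metis lessThan_iff mod_less_divisor)
    show "\<forall>i<m. det2 (v ((i + s) mod m)) (v ((Suc i mod m + s) mod m)) = 1"
      unfolding rot_suc using F(3) m by simp
    have "(\<Union>i<m. Cn (\<lambda>k. v ((k + s) mod m)) m i) = (\<Union>i\<in>r ` {..<m}. Cn v m i)"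
      unfolding Cr by auto
    also have "\<dots> = UNIV" using F(4) rot_image[OF m] unfolding r_def by simp
    finally show "(\<Union>i<m. Cn (\<lambda>k. v ((k + s) mod m)) m i) = UNIV" .
    show "\<forall>i<m. \<forall>j<m. i \<noteq> j \<longrightarrow> interior (Cn (\<lambda>k. v ((k + s) mod m)) m i) \<inter> interior (Cn (\<lambda>k. v ((k + s) mod m)) m j) = {}"
      unfolding Cr using F(5) rl rot_inj unfolding r_def by metis
  qed
qed


lemma cone2I: "s \<ge> 0 \<Longrightarrow> t \<ge> 0 \<Longrightarrow> x = s *\<^sub>R u + t *\<^sub>R w \<Longrightarrow> x \<in> cone2 u w"
  unfolding cone2_def by blast

lemma adj_disj:
  assumes "rdet u w = 1" "rdet w z = 1"
  shows "interior (cone2 u w) \<inter> interior (cone2 w z) = {}"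
proof (rule int_disjoint_sep[where p = w])
  show "\<forall>x\<in>cone2 u w. 0 \<le> rdet x w" using cone_halfplanes[OF assms(1)] by blast
  show "\<forall>x\<in>cone2 w z. rdet x w \<le> 0" using cone_halfplanes[OF assms(2)]
    by (metis neg_le_0_iff_le rdet_swap)
  show "w \<noteq> 0" using assms(1) by (metis rdet_def fst_zero snd_zero mult_zero_right diff_self zero_neq_one)
qed

lemma lt3: "i < (3::nat) \<longleftrightarrow> i = 0 \<or> i = 1 \<or> i = 2" by auto
lemma UN3: "(\<Union>i<(3::nat). f i) = f 0 \<union> f 1 \<union> f 2"
proof -
  have "{..<(3::nat)} = {0,1,2}" by auto
  then show ?thesis by auto
qed
lemma UN4: "(\<Union>i<(4::nat). f i) = f 0 \<union> f 1 \<union> f 2 \<union> f 3"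
proof -
  have "{..<(4::nat)} = {0,1,2,3}" by auto
  then show ?thesis by auto
qed
lemma pairs3: "P 0 1 \<Longrightarrow> P 1 0 \<Longrightarrow> P 0 2 \<Longrightarrow> P 2 0 \<Longrightarrow> P 1 2 \<Longrightarrow> P 2 1
  \<Longrightarrow> \<forall>i<(3::nat). \<forall>j<3. i \<noteq> j \<longrightarrow> P i j"
  unfolding lt3 by auto
lemma lt4: "i < (4::nat) \<longleftrightarrow> i = 0 \<or> i = 1 \<or> i = 2 \<or> i = 3" by auto

definition v3a :: "nat \<Rightarrow> int \<times> int" where
  "v3a k = (if k = 0 then (1, 0) else if k = 1 then (0, 1) else (-1, -1))"
definition v3b :: "nat \<Rightarrow> int \<times> int" where
  "v3b k = (if k = 0 then (1, 0) else if k = 1 then (1, 1) else (-2, -1))"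
definition v4 :: "nat \<Rightarrow> int \<times> int" where
  "v4 k = (if k = 0 then (1, 0) else if k = 1 then (0, 1) else if k = 2 then (-1, 0) else (0, -1))"

lemma fan_v3a: "complete_nonsingular_fan2 3 v3a"
proof (rule fanI)
  have C: "Cn v3a 3 0 = cone2 (1, 0) (0, 1)" "Cn v3a 3 1 = cone2 (0, 1) (-1, -1)"
    "Cn v3a 3 2 = cone2 (-1, -1) (1, 0)"
    by (simp_all add: Cn_def v3a_def of_iv_def)
  show "\<forall>i<3. coprime (fst (v3a i)) (snd (v3a i))" unfolding lt3 by (auto simp: v3a_def)
  show "inj_on v3a {..<3}" unfolding inj_on_def lessThan_iff lt3 by (auto simp: v3a_def)
  show "\<forall>i<3. det2 (v3a i) (v3a (Suc i mod 3)) = 1" unfolding lt3 by (auto simp: v3a_def det2_def)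
  have "x \<in> cone2 (1, 0) (0, 1) \<union> cone2 (0, 1) (-1, -1) \<union> cone2 (-1, -1) (1, 0)" for x :: "real \<times> real"
  proof (cases x)
    case (Pair a b)
    show ?thesis
    proof (cases "a \<ge> 0 \<and> b \<ge> 0")
      case True
      then show ?thesis using Pair by (intro UnI1 cone2I[of a b]) auto
    next
      case F1: False
      show ?thesis
      proof (cases "a \<le> 0 \<and> b \<ge> a")
        case True
        then show ?thesis using Pair by (intro UnI1 UnI2 cone2I[of "b - a" "- a"]) auto
      next
        case False
        then show ?thesis using Pair F1 by (intro UnI2 cone2I[of "- b" "a - b"]) auto
      qed
    qed
  qed
  then show "(\<Union>i<3. Cn v3a 3 i) = UNIV" unfolding UN3 C by blast
  have d: "rdet (1, 0) (0, 1) = 1" "rdet (0, 1) (-1, -1) = 1" "rdet (-1, -1) (1, 0) = 1"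
    by (simp_all add: rdet_def)
  note a1 = adj_disj[OF d(1) d(2)] and a2 = adj_disj[OF d(2) d(3)] and a3 = adj_disj[OF d(3) d(1)]
  show "\<forall>i<3. \<forall>j<3. i \<noteq> j \<longrightarrow> interior (Cn v3a 3 i) \<inter> interior (Cn v3a 3 j) = {}"
    apply (rule pairs3) unfolding C using a1 a2 a3 by (simp_all add: inf_commute)
qed

lemma fan_v3b: "complete_nonsingular_fan2 3 v3b"
proof (rule fanI)
  have C: "Cn v3b 3 0 = cone2 (1, 0) (1, 1)" "Cn v3b 3 1 = cone2 (1, 1) (-2, -1)"
    "Cn v3b 3 2 = cone2 (-2, -1) (1, 0)"
    by (simp_all add: Cn_def v3b_def of_iv_def)
  show "\<forall>i<3. coprime (fst (v3b i)) (snd (v3b i))" unfolding lt3 by (auto simp: v3b_def)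
  show "inj_on v3b {..<3}" unfolding inj_on_def lessThan_iff lt3 by (auto simp: v3b_def)
  show "\<forall>i<3. det2 (v3b i) (v3b (Suc i mod 3)) = 1" unfolding lt3 by (auto simp: v3b_def det2_def)
  have "x \<in> cone2 (1, 0) (1, 1) \<union> cone2 (1, 1) (-2, -1) \<union> cone2 (-2, -1) (1, 0)" for x :: "real \<times> real"
  proof (cases x)
    case (Pair a b)
    show ?thesis
    proof (cases "b \<ge> 0 \<and> a \<ge> b")
      case True
      then show ?thesis using Pair by (intro UnI1 cone2I[of "a - b" b]) auto
    next
      case F1: False
      show ?thesis
      proof (cases "b \<le> 0 \<and> a \<ge> 2 * b")
        case True
        then show ?thesis using Pair by (intro UnI2 cone2I[of "- b" "a - 2 * b"]) auto
      next
        case False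
        then show ?thesis using Pair F1 by (intro UnI1 UnI2 cone2I[of "2 * b - a" "b - a"]) auto
      qed
    qed
  qed
  then show "(\<Union>i<3. Cn v3b 3 i) = UNIV" unfolding UN3 C by blast
  have d: "rdet (1, 0) (1, 1) = 1" "rdet (1, 1) (-2, -1) = 1" "rdet (-2, -1) (1, 0) = 1"
    by (simp_all add: rdet_def)
  note a1 = adj_disj[OF d(1) d(2)] and a2 = adj_disj[OF d(2) d(3)] and a3 = adj_disj[OF d(3) d(1)]
  show "\<forall>i<3. \<forall>j<3. i \<noteq> j \<longrightarrow> interior (Cn v3b 3 i) \<inter> interior (Cn v3b 3 j) = {}"
    apply (rule pairs3) unfolding C using a1 a2 a3 by (simp_all add: inf_commute)
qed

lemma pairs4: "P 0 1 \<Longrightarrow> P 1 0 \<Longrightarrow> P 0 2 \<Longrightarrow> P 2 0 \<Longrightarrow> P 1 2 \<Longrightarrow> P 2 1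
  \<Longrightarrow> P 0 3 \<Longrightarrow> P 3 0 \<Longrightarrow> P 1 3 \<Longrightarrow> P 3 1 \<Longrightarrow> P 2 3 \<Longrightarrow> P 3 2
  \<Longrightarrow> \<forall>i<(4::nat). \<forall>j<4. i \<noteq> j \<longrightarrow> P i j"
  unfolding lt4 by auto

lemma fan_v4: "complete_nonsingular_fan2 4 v4"
proof (rule fanI)
  have C: "Cn v4 4 0 = cone2 (1, 0) (0, 1)" "Cn v4 4 1 = cone2 (0, 1) (-1, 0)"
    "Cn v4 4 2 = cone2 (-1, 0) (0, -1)" "Cn v4 4 3 = cone2 (0, -1) (1, 0)"
    by (simp_all add: Cn_def v4_def of_iv_def)
  show "\<forall>i<4. coprime (fst (v4 i)) (snd (v4 i))" unfolding lt4 by (auto simp: v4_def)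
  show "inj_on v4 {..<4}" unfolding inj_on_def lessThan_iff lt4 by (auto simp: v4_def)
  show "\<forall>i<4. det2 (v4 i) (v4 (Suc i mod 4)) = 1" unfolding lt4 by (auto simp: v4_def det2_def)
  have "x \<in> cone2 (1, 0) (0, 1) \<union> cone2 (0, 1) (-1, 0) \<union> cone2 (-1, 0) (0, -1) \<union> cone2 (0, -1) (1, 0)" for x :: "real \<times> real"
  proof (cases x)
    case (Pair a b)
    consider "a \<ge> 0" "b \<ge> 0" | "a \<le> 0" "b \<ge> 0" | "a \<le> 0" "b \<le> 0" | "a \<ge> 0" "b \<le> 0" by linarith
    then show ?thesis
    proof cases
      case 1 then show ?thesis using Pair by (intro UnI1 cone2I[of a b]) auto
    next
      case 2 then show ?thesis using Pair by (intro UnI1 UnI2 cone2I[of b "- a"]) auto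
    next
      case 3 then show ?thesis using Pair by (intro UnI1 UnI2 cone2I[of "- a" "- b"]) auto
    next
      case 4 then show ?thesis using Pair by (intro UnI2 cone2I[of "- b" a]) auto
    qed
  qed
  then show "(\<Union>i<4. Cn v4 4 i) = UNIV" unfolding UN4 C by blast
  have d: "rdet (1, 0) (0, 1) = 1" "rdet (0, 1) (-1, 0) = 1" "rdet (-1, 0) (0, -1) = 1" "rdet (0, -1) (1, 0) = 1"
    by (simp_all add: rdet_def)
  note a1 = adj_disj[OF d(1) d(2)] and a2 = adj_disj[OF d(2) d(3)] and a3 = adj_disj[OF d(3) d(4)]
    and a4 = adj_disj[OF d(4) d(1)]
  have a5: "interior (cone2 (1, 0) (0, 1)) \<inter> interior (cone2 (-1, 0) (0, -1)) = {}"
    by (rule int_disjoint_sep[where p = "(0, 1)"]) (auto simp: cone2_def rdet_def zero_prod_def)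
  have a6: "interior (cone2 (0, -1) (1, 0)) \<inter> interior (cone2 (0, 1) (-1, 0)) = {}"
    by (rule int_disjoint_sep[where p = "(1, 0)"]) (auto simp: cone2_def rdet_def zero_prod_def)
  show "\<forall>i<4. \<forall>j<4. i \<noteq> j \<longrightarrow> interior (Cn v4 4 i) \<inter> interior (Cn v4 4 j) = {}"
    apply (rule pairs4) unfolding C using a1 a2 a3 a4 a5 a6 by (simp_all add: inf_commute)
qed


lemma mod2_add: "mod2 (a + b) = (fst (mod2 a) \<noteq> fst (mod2 b), snd (mod2 a) \<noteq> snd (mod2 b))"
  by (simp add: mod2_def)

lemma xor3: "x \<in> {va, vb, vc} \<Longrightarrow> y \<in> {va, vb, vc} \<Longrightarrow> z \<in> {va, vb, vc} \<Longrightarrow>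
  x \<noteq> y \<Longrightarrow> y \<noteq> z \<Longrightarrow> x \<noteq> z \<Longrightarrow> z = (fst x \<noteq> fst y, snd x \<noteq> snd y)"
  by (auto simp: va_def vb_def vc_def)

lemma three_cases: "x \<in> {va, vb, vc} \<Longrightarrow> y \<in> {va, vb, vc} \<Longrightarrow> z \<in> {va, vb, vc} \<Longrightarrow>
  w \<in> {va, vb, vc} \<Longrightarrow> x \<noteq> y \<Longrightarrow> y \<noteq> z \<Longrightarrow> x \<noteq> z \<Longrightarrow> w = x \<or> w = y \<or> w = z"
  by auto

lemma char_map_rot:
  assumes "char_map m lam" "0 < m"
  shows "char_map m (\<lambda>k. lam ((k + s) mod m))"
  using assms unfolding char_map_def rot_suc by simp

definition Sn :: "nat \<Rightarrow> nat \<Rightarrow> nat" where "Sn n i = Suc i mod n"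
definition Pn :: "nat \<Rightarrow> nat \<Rightarrow> nat" where "Pn n i = (i + n - 1) mod n"

lemma Sn_eq: "i < n \<Longrightarrow> Sn n i = (if Suc i < n then Suc i else 0)"
  unfolding Sn_def by (metis Suc_lessI mod_less mod_self)
lemma Pn_eq: "i < n \<Longrightarrow> Pn n i = (if i = 0 then n - 1 else i - 1)"
  unfolding Pn_def using mod2case[of "i + n - 1" n] by auto

lemma perm3: "x \<in> {va, vb, vc} \<Longrightarrow> y \<in> {va, vb, vc} \<Longrightarrow> z \<in> {va, vb, vc} \<Longrightarrow>
  x \<noteq> y \<Longrightarrow> y \<noteq> z \<Longrightarrow> z \<noteq> x \<Longrightarrow>
  (x = va \<and> y = vb \<and> z = vc) \<or> (x = vb \<and> y = vc \<and> z = va) \<or>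
    (x = vc \<and> y = va \<and> z = vb) \<or> (x = va \<and> y = vc \<and> z = vb) \<or>
    (x = vc \<and> y = vb \<and> z = va) \<or> (x = vb \<and> y = va \<and> z = vc)"
  by (elim insertE emptyE; simp add: va_def vb_def vc_def)

lemma all3: "(\<forall>i<(3::nat). P i) \<longleftrightarrow> P 0 \<and> P 1 \<and> P 2"
  unfolding lt3 by auto

lemma base3:
  assumes "char_map 3 lam"
  shows "\<exists>v. complete_nonsingular_fan2 3 v \<and> (\<forall>i<3. mod2 (v i) = lam i)"
proof -
  have H: "\<forall>i<3. lam i \<noteq> lam (Suc i mod 3)" "\<forall>i<3. lam i \<in> {va, vb, vc}"
    using assms unfolding char_map_def by auto
  have l: "lam 0 \<in> {va, vb, vc}" "lam 1 \<in> {va, vb, vc}" "lam 2 \<in> {va, vb, vc}"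
    using H(2) by auto
  have "lam 0 \<noteq> lam (Suc 0 mod 3)" "lam 1 \<noteq> lam (Suc 1 mod 3)" "lam 2 \<noteq> lam (Suc 2 mod 3)"
    using H(1) by (simp_all only: lt3) (metis zero_less_numeral, metis one_less_numeral_iff semiring_norm(77), metis lessI numeral_2_eq_2 numeral_3_eq_3)
  then have l2: "lam 0 \<noteq> lam 1" "lam 1 \<noteq> lam 2" "lam 2 \<noteq> lam 0" by (simp_all add: numeral_2_eq_2)
  have ab: "va \<noteq> vb" "vb \<noteq> vc" "va \<noteq> vc" by (auto simp: va_def vb_def vc_def)
  have ra: "complete_nonsingular_fan2 3 (\<lambda>k. v3a ((k + s) mod 3))" for s
    by (rule fan_rot[OF fan_v3a]) simp
  have rb: "complete_nonsingular_fan2 3 (\<lambda>k. v3b ((k + s) mod 3))" for s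
    by (rule fan_rot[OF fan_v3b]) simp
  have ma: "mod2 (v3a k) = (if k = 0 then va else if k = 1 then vb else vc)" for k
    by (simp_all add: v3a_def mod2_def va_def vb_def vc_def)
  have mb: "mod2 (v3b k) = (if k = 0 then va else if k = 1 then vc else vb)" for k
    by (simp_all add: v3b_def mod2_def va_def vb_def vc_def)
  have cases: "(lam 0 = va \<and> lam 1 = vb \<and> lam 2 = vc) \<or> (lam 0 = vb \<and> lam 1 = vc \<and> lam 2 = va) \<or>
    (lam 0 = vc \<and> lam 1 = va \<and> lam 2 = vb) \<or> (lam 0 = va \<and> lam 1 = vc \<and> lam 2 = vb) \<or>
    (lam 0 = vc \<and> lam 1 = vb \<and> lam 2 = va) \<or> (lam 0 = vb \<and> lam 1 = va \<and> lam 2 = vc)"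
    using perm3[OF l l2] .
  show ?thesis
  proof -
    { fix s :: nat and f
      assume "f = v3a \<or> f = v3b" and "\<forall>i<3. mod2 (f ((i + s) mod 3)) = lam i"
      then have ?thesis using ra rb by blast }
    note W = this
    show ?thesis using cases
    proof (elim disjE)
      assume h: "lam 0 = va \<and> lam 1 = vb \<and> lam 2 = vc"
      show ?thesis by (rule W[of v3a 0]) (use h in \<open>simp_all add: all3 ma\<close>)
    next
      assume h: "lam 0 = vb \<and> lam 1 = vc \<and> lam 2 = va"
      show ?thesis by (rule W[of v3a 1]) (use h in \<open>simp_all add: all3 ma\<close>)
    next
      assume h: "lam 0 = vc \<and> lam 1 = va \<and> lam 2 = vb"
      show ?thesis by (rule W[of v3a 2]) (use h in \<open>simp_all add: all3 ma\<close>)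
    next
      assume h: "lam 0 = va \<and> lam 1 = vc \<and> lam 2 = vb"
      show ?thesis by (rule W[of v3b 0]) (use h in \<open>simp_all add: all3 mb\<close>)
    next
      assume h: "lam 0 = vc \<and> lam 1 = vb \<and> lam 2 = va"
      show ?thesis by (rule W[of v3b 1]) (use h in \<open>simp_all add: all3 mb\<close>)
    next
      assume h: "lam 0 = vb \<and> lam 1 = va \<and> lam 2 = vc"
      show ?thesis by (rule W[of v3b 2]) (use h in \<open>simp_all add: all3 mb\<close>)
    qed
  qed
qed


lemma Sn_lt: "0 < n \<Longrightarrow> Sn n i < n" unfolding Sn_def by simp
lemma Pn_lt: "0 < n \<Longrightarrow> Pn n i < n" unfolding Pn_def by simp

lemma good_del:
  assumes n: "4 \<le> n" and cm: "char_map n lam" and c3: "card (lam ` {..<n}) = 3"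
  shows "\<exists>i<n. lam (Pn n i) \<noteq> lam (Sn n i) \<and> card (lam ` ({..<n} - {i})) = 3"
proof (rule ccontr)
  assume H: "\<not> ?thesis"
  have n0: "0 < n" using n by simp
  have R: "\<forall>i<n. lam i \<in> {va, vb, vc}" and A: "\<forall>i<n. lam i \<noteq> lam (Sn n i)"
    using cm unfolding char_map_def Sn_def by auto
  have SP: "Sn n (Pn n i) = i" "Pn n (Sn n i) = i" if "i < n" for i
    using that n by (auto simp: Sn_eq Pn_eq Sn_lt Pn_lt)
  have D: "Sn n (Sn n i) \<noteq> i" "Pn n (Pn n i) \<noteq> i" "Sn n (Sn n i) \<noteq> Pn n i" "Sn n i \<noteq> i" "Pn n i \<noteq> i"
    if "i < n" for i
    using that n by (auto simp: Sn_eq Pn_eq Sn_lt Pn_lt)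
  have uniq: "\<forall>j<n. j \<noteq> i \<longrightarrow> lam j \<noteq> lam i" if "i < n" "lam (Pn n i) \<noteq> lam (Sn n i)" for i
  proof (intro allI impI)
    fix j assume j: "j < n" "j \<noteq> i"
    show "lam j \<noteq> lam i"
    proof
      assume e: "lam j = lam i"
      have "lam ` ({..<n} - {i}) = lam ` {..<n}"
      proof
        show "lam ` ({..<n} - {i}) \<subseteq> lam ` {..<n}" by auto
        show "lam ` {..<n} \<subseteq> lam ` ({..<n} - {i})"
        proof
          fix x assume "x \<in> lam ` {..<n}"
          then obtain k where k: "k < n" "x = lam k" by auto
          show "x \<in> lam ` ({..<n} - {i})"
          proof (cases "k = i")
            case True then show ?thesis using k j e by (metis Diff_iff image_eqI lessThan_iff singletonD)
          next
            case False then show ?thesis using k by auto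
          qed
        qed
      qed
      then show False using H that c3 by auto
    qed
  qed
  obtain i0 where i0: "i0 < n" "lam (Pn n i0) \<noteq> lam (Sn n i0)"
  proof (rule ccontr)
    assume "\<not> thesis"
    then have E: "\<forall>i<n. lam (Pn n i) = lam (Sn n i)" using that by blast
    have "lam k \<in> {lam 0, lam 1}" if "k < n" for k
      using that
    proof (induction k rule: less_induct)
      case (less k)
      show ?case
      proof (cases "k < 2")
        case True then show ?thesis by (cases k) auto
      next
        case False
        then obtain j where kj: "k = Suc (Suc j)" by (metis add_2_eq_Suc' le_add_diff_inverse2 not_less)
        have "Suc j < n" using less kj by simp
        then have "Pn n (Suc j) = j" "Sn n (Suc j) = k" using kj less by (simp_all add: Pn_eq Sn_eq)
        then have "lam k = lam j" using E \<open>Suc j < n\<close> by metis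
        then show ?thesis using less kj by auto
      qed
    qed
    then have "lam ` {..<n} \<subseteq> {lam 0, lam 1}" by (meson image_subsetI lessThan_iff)
    then have "card (lam ` {..<n}) \<le> card {lam 0, lam 1}" by (intro card_mono) auto
    also have "\<dots> \<le> 2" by (simp add: card_insert_le_m1)
    finally show False using c3 by simp
  qed
  define a where "a = Pn n i0"
  define b where "b = Sn n i0"
  define c where "c = Sn n b"
  have abn: "a < n" "b < n" "c < n" unfolding a_def b_def c_def using n0 by (simp_all add: Sn_lt Pn_lt)
  have u0: "\<forall>j<n. j \<noteq> i0 \<longrightarrow> lam j \<noteq> lam i0" using uniq i0 by blast
  have "c \<noteq> i0" unfolding c_def b_def using D(1) i0(1) by blast
  then have "lam c \<noteq> lam i0" using u0 abn by blast
  moreover have "Pn n b = i0" unfolding b_def using SP i0 by blast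
  ultimately have ub: "\<forall>j<n. j \<noteq> b \<longrightarrow> lam j \<noteq> lam b" using uniq[of b] abn unfolding c_def by metis
  have "Pn n a \<noteq> i0" unfolding a_def using D(2) i0(1) by blast
  then have "lam (Pn n a) \<noteq> lam i0" using u0 n0 Pn_lt by blast
  moreover have "Sn n a = i0" unfolding a_def using SP i0 by blast
  ultimately have ua: "\<forall>j<n. j \<noteq> a \<longrightarrow> lam j \<noteq> lam a" using uniq[of a] abn by metis
  have d1: "lam a \<noteq> lam i0" using A abn \<open>Sn n a = i0\<close> by metis
  have d2: "lam i0 \<noteq> lam b" using A i0 unfolding b_def by blast
  have d3: "lam a \<noteq> lam b" using i0 unfolding a_def b_def by blast
  have "lam c = lam a \<or> lam c = lam i0 \<or> lam c = lam b"
    by (rule three_cases) (use R abn i0 d1 d2 d3 in auto)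
  moreover have "c \<noteq> a" unfolding c_def b_def a_def using D(3) i0(1) by blast
  moreover have "c \<noteq> b" unfolding c_def using D(4) abn by blast
  ultimately show False using ua ub u0 abn \<open>c \<noteq> i0\<close> by metis
qed


lemma construct:
  assumes "3 \<le> m" "char_map m lam" "card (lam ` {..<m}) = 3"
  shows "\<exists>v. complete_nonsingular_fan2 m v \<and> (\<forall>i<m. mod2 (v i) = lam i)"
  using assms
proof (induction m arbitrary: lam rule: nat_induct_at_least)
  case base
  then show ?case using base3 by blast
next
  case (Suc m)
  define n where "n = Suc m"
  have n: "4 \<le> n" "0 < n" using Suc.hyps unfolding n_def by auto
  have cm: "char_map n lam" "card (lam ` {..<n}) = 3" using Suc.prems unfolding n_def by auto
  obtain i where i: "i < n" "lam (Pn n i) \<noteq> lam (Sn n i)" "card (lam ` ({..<n} - {i})) = 3"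
    using good_del[OF n(1) cm] by blast
  define r where "r = (\<lambda>k. (k + Suc i) mod n)"
  define lam' where "lam' = (\<lambda>k. lam (r k))"
  have cm': "char_map n lam'" unfolding lam'_def r_def by (rule char_map_rot[OF cm(1) n(2)])
  have rm: "r m = i" unfolding r_def n_def using i(1) n_def
    by (metis add_Suc_right add.commute mod_add_self2 mod_less)
  have rm1: "r (m - 1) = Pn n i" unfolding r_def Pn_def n_def using Suc.hyps
    by (metis Suc_diff_1 add.commute add_Suc_right add_diff_cancel_left' diff_Suc_1 le_add_diff_inverse
        less_le_trans numeral_3_eq_3 zero_less_Suc)
  have r0: "r 0 = Sn n i" unfolding r_def Sn_def by simp
  have L: "lam' m = lam i" "lam' (m - 1) = lam (Pn n i)" "lam' 0 = lam (Sn n i)"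
    unfolding lam'_def using rm rm1 r0 by auto
  have R': "\<forall>k<n. lam' k \<in> {va, vb, vc}" and A': "\<forall>k<n. lam' k \<noteq> lam' (Suc k mod n)"
    using cm' unfolding char_map_def by auto
  have cmm: "char_map m lam'"
    unfolding char_map_def
  proof (intro conjI allI impI)
    fix k assume k: "k < m"
    then show "lam' k \<in> {va, vb, vc}" using R' unfolding n_def by auto
    show "lam' k \<noteq> lam' (Suc k mod m)"
    proof (cases "Suc k < m")
      case True
      then have "Suc k mod m = Suc k" "Suc k mod n = Suc k" unfolding n_def by auto
      then show ?thesis using A' k unfolding n_def by (metis less_SucI)
    next
      case False
      then have sk: "Suc k = m" using k by simp
      then have "k = m - 1" "Suc k mod m = 0" by auto
      then show ?thesis using L i(2) by simp
    qed
  qed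
  have inj_r: "inj_on r {..<n}" unfolding r_def inj_on_def by (meson lessThan_iff rot_inj)
  have img_r: "r ` {..<n} = {..<n}" unfolding r_def by (rule rot_image[OF n(2)])
  have "r ` {..<m} = r ` ({..<n} - {m})" unfolding n_def by (metis lessThan_Suc Diff_insert_absorb lessThan_iff less_irrefl)
  also have "\<dots> = r ` {..<n} - r ` {m}" by (rule inj_on_image_set_diff[OF inj_r]) (auto simp: n_def)
  also have "\<dots> = {..<n} - {i}" using img_r rm by simp
  finally have "lam' ` {..<m} = lam ` ({..<n} - {i})" unfolding lam'_def by (metis image_image)
  then have c3: "card (lam' ` {..<m}) = 3" using i(3) by simp
  obtain v'' where v'': "complete_nonsingular_fan2 m v''" "\<forall>k<m. mod2 (v'' k) = lam' k"
    using Suc.IH[OF cmm c3] by blast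
  define V where "V = (\<lambda>k. if k < m then v'' k else v'' (m - 1) + v'' 0)"
  have fV: "complete_nonsingular_fan2 n V" unfolding V_def n_def
    by (rule fan_append[OF v''(1) Suc.hyps])
  have mV: "mod2 (V k) = lam' k" if "k < n" for k
  proof (cases "k < m")
    case True then show ?thesis using v'' unfolding V_def by auto
  next
    case False
    then have k: "k = m" using that unfolding n_def by auto
    have m1: "m - 1 < m" "0 < m" using Suc.hyps by auto
    have e1: "lam' (m - 1) \<noteq> lam' m"
    proof -
      have "Suc (m - 1) mod n = m" using m1 unfolding n_def by simp
      moreover have "m - 1 < n" using m1 unfolding n_def by simp
      ultimately show ?thesis using A' by metis
    qed
    have e2: "lam' m \<noteq> lam' 0" using A'[rule_format, of m] unfolding n_def by simp
    have "mod2 (V m) = (fst (lam' (m - 1)) \<noteq> fst (lam' 0), snd (lam' (m - 1)) \<noteq> snd (lam' 0))"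
      unfolding V_def using v''(2) m1 by (simp add: mod2_add)
    also have "\<dots> = lam' m"
    proof (rule xor3[symmetric])
      show "lam' (m - 1) \<in> {va, vb, vc}" "lam' 0 \<in> {va, vb, vc}" "lam' m \<in> {va, vb, vc}"
        using R' m1 unfolding n_def by auto
      show "lam' (m - 1) \<noteq> lam' 0" using L i(2) by simp
      show "lam' 0 \<noteq> lam' m" using e2 by simp
      show "lam' (m - 1) \<noteq> lam' m" using e1 .
    qed
    finally show ?thesis using k by simp
  qed
  define t where "t = n - Suc i"
  have bk: "r ((k + t) mod n) = k" if "k < n" for k
  proof -
    have "r ((k + t) mod n) = (k + t + Suc i) mod n" unfolding r_def by (metis mod_add_left_eq)
    also have "k + t + Suc i = k + n" unfolding t_def using i(1) by simp
    finally show ?thesis using that by simp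
  qed
  show ?case
  proof (intro exI conjI)
    show "complete_nonsingular_fan2 (Suc m) (\<lambda>k. V ((k + t) mod n))"
      using fan_rot[OF fV n(2)] unfolding n_def by simp
    show "\<forall>k<Suc m. mod2 (V ((k + t) mod n)) = lam k"
    proof (intro allI impI)
      fix k assume "k < Suc m"
      then have k: "k < n" unfolding n_def .
      have "mod2 (V ((k + t) mod n)) = lam' ((k + t) mod n)" using mV n(2) by simp
      also have "\<dots> = lam k" unfolding lam'_def using bk[OF k] by simp
      finally show "mod2 (V ((k + t) mod n)) = lam k" .
    qed
  qed
qed


lemma rel3:
  assumes "det2 a b = 1" "det2 b c = 1"
  shows "a + c = (det2 a c * fst b, det2 a c * snd b)"
proof -
  obtain a1 a2 b1 b2 c1 c2 where p: "a = (a1, a2)" "b = (b1, b2)" "c = (c1, c2)" by (metis prod.exhaust)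
  have h1: "a1 * b2 - a2 * b1 = 1" and h2: "b1 * c2 - b2 * c1 = 1" using assms p by (auto simp: det2_def)
  have "a1 + c1 = a1 * (b1 * c2 - b2 * c1) + c1 * (a1 * b2 - a2 * b1)" using h1 h2 by simp
  also have "\<dots> = (a1 * c2 - a2 * c1) * b1" by (simp add: algebra_simps)
  finally have e1: "a1 + c1 = (a1 * c2 - a2 * c1) * b1" .
  have "a2 + c2 = a2 * (b1 * c2 - b2 * c1) + c2 * (a1 * b2 - a2 * b1)" using h1 h2 by simp
  also have "\<dots> = (a1 * c2 - a2 * c1) * b2" by (simp add: algebra_simps)
  finally have e2: "a2 + c2 = (a1 * c2 - a2 * c1) * b2" .
  show ?thesis using p e1 e2 by (simp add: det2_def)
qed

lemma det2_swap: "det2 a b = - det2 b a" by (simp add: det2_def)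
lemma det2_self: "det2 a a = 0" by (simp add: det2_def)
lemma det2_neg_right: "det2 a (- b) = - det2 a b" by (simp add: det2_def)

lemma pl1: "det2 a b * det2 u c + det2 b c * det2 u a + det2 c a * det2 u b = 0"
  by (simp add: det2_def algebra_simps)

lemma pl2: "det2 u m0 * det2 c d = det2 u c * det2 m0 d - det2 u d * det2 m0 c"
  by (simp add: det2_def algebra_simps)

lemma par:
  assumes "det2 x m0 = 0" "det2 y m0 = 0" "det2 u m0 = 1"
  shows "det2 x y = 0"
proof -
  have "det2 u m0 * det2 x y = det2 u x * det2 m0 y - det2 u y * det2 m0 x" by (rule pl2)
  moreover have "det2 m0 y = 0" "det2 m0 x = 0" using assms det2_swap by (metis neg_equal_0_iff_equal)+
  ultimately show ?thesis using assms(3) by simp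
qed

definition N2 :: "int \<times> int \<Rightarrow> int" where "N2 p = fst p ^ 2 + snd p ^ 2"

lemma N2_para: "N2 (a + c) + N2 (a - c) = 2 * N2 a + 2 * N2 c"
  by (simp add: N2_def power2_eq_square algebra_simps)

lemma N2_zero:
  assumes "N2 p \<le> 0" shows "p = 0"
proof -
  have a: "fst p ^ 2 \<ge> 0" "snd p ^ 2 \<ge> 0" by simp_all
  then have "fst p ^ 2 = 0" "snd p ^ 2 = 0" using assms unfolding N2_def by linarith+
  then have "fst p = 0" "snd p = 0" by simp_all
  then show ?thesis by (simp add: prod_eq_iff)
qed

lemma N2_scale: "N2 (s * fst b, s * snd b) = s ^ 2 * N2 b"
  by (simp add: N2_def power2_eq_square algebra_simps)

lemma even_coef:
  assumes "mod2 a = mod2 c" "fst (mod2 b) \<or> snd (mod2 b)" "a + c = (s * fst b, s * snd b)"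
  shows "even s"
proof -
  have "even (fst a + fst c)" "even (snd a + snd c)" using assms(1) by (auto simp: mod2_def)
  moreover have "fst a + fst c = s * fst b" "snd a + snd c = s * snd b" using assms(3)
    by (metis fst_add fst_conv, metis snd_add snd_conv)
  ultimately have "even (s * fst b)" "even (s * snd b)" by auto
  then show ?thesis using assms(2) by (auto simp: mod2_def)
qed


lemma suc_cancel: "0 < m \<Longrightarrow> Suc x mod m = Suc y mod (m::nat) \<Longrightarrow> x mod m = y mod m"
  by (metis mod_Suc_eq mod_less_divisor rot_inj Suc_eq_plus1)

lemma suc_cong: "x mod m = y mod (m::nat) \<Longrightarrow> Suc x mod m = Suc y mod m"
  by (metis mod_Suc_eq)

lemma halfplane:
  fixes w :: "nat \<Rightarrow> int \<times> int" and m j :: nat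
  assumes m: "0 < m"
    and dt: "\<forall>k. det2 (w k) (w (Suc k)) = 1"
    and dj: "\<forall>k l. k mod m \<noteq> l mod m \<longrightarrow>
       interior (cone2 (of_iv (w k)) (of_iv (w (Suc k)))) \<inter> interior (cone2 (of_iv (w l)) (of_iv (w (Suc l)))) = {}"
    and wm: "\<forall>k l. k mod m = l mod m \<longrightarrow> w k = w l"
    and z: "w j + w (Suc (Suc j)) = 0"
  shows "\<forall>k. k mod m \<notin> {j mod m, Suc j mod m, Suc (Suc j) mod m} \<longrightarrow> det2 (w j) (w k) < 0"
proof -
  define u where "u = w j"
  define mid where "mid = w (Suc j)"
  have wjj: "w (Suc (Suc j)) = - u" using z unfolding u_def by (simp add: eq_neg_iff_add_eq_0 add.commute)
  have umid: "det2 u mid = 1" using dt unfolding u_def mid_def by blast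
  define U where "U = of_iv u"
  define Mid where "Mid = of_iv mid"
  have UMid: "rdet U Mid = 1" unfolding U_def Mid_def by (simp add: rdet_of_iv umid)
  have MidU: "rdet Mid (- U) = 1" using UMid by (simp add: rdet_def algebra_simps)
  have notpos: "\<not> det2 u (w k) > 0" if kS: "k mod m \<notin> {j mod m, Suc j mod m, Suc (Suc j) mod m}" for k
  proof
    assume pos: "det2 u (w k) > 0"
    define q where "q = w (Suc k)"
    have kq: "det2 (w k) q = 1" using dt unfolding q_def by blast
    define A where "A = real_of_int (det2 u q)"
    define B where "B = real_of_int (det2 q mid)"
    define e where "e = 1 / (2 * (\<bar>A\<bar> + \<bar>B\<bar> + 1))"
    have e: "e > 0" "\<bar>e * A\<bar> < 1/2" "\<bar>e * B\<bar> < 1/2" unfolding e_def by (rule small_eps)+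
    define z where "z = of_iv (w k) + e *\<^sub>R of_iv q"
    have "z \<in> OC (of_iv (w k)) (of_iv q)" unfolding z_def by (rule near_point[OF kq e(1)])
    then have zk: "z \<in> interior (cone2 (of_iv (w k)) (of_iv (w (Suc k))))"
      using OC_sub_int[of "of_iv (w k)" "of_iv q"] kq unfolding q_def by (auto simp: rdet_of_iv)
    have "rdet U z = real_of_int (det2 u (w k)) + e * A"
      unfolding z_def U_def A_def by (simp add: rdet_lin rdet_of_iv)
    moreover have "real_of_int (det2 u (w k)) \<ge> 1" using pos by simp
    ultimately have zu: "rdet U z > 0" using e by linarith
    have zm: "rdet z Mid = real_of_int (det2 (w k) mid) + e * B"
      unfolding z_def Mid_def B_def by (simp add: rdet_lin rdet_of_iv)
    have sig: "rdet z Mid \<noteq> 0"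
    proof (cases "det2 (w k) mid = 0")
      case True
      have "det2 q mid \<noteq> 0"
      proof
        assume "det2 q mid = 0"
        then have "det2 (w k) q = 0" using par[OF True _ umid] by blast
        then show False using kq by simp
      qed
      then show ?thesis using zm True e(1) unfolding B_def by simp
    next
      case False
      then have "\<bar>real_of_int (det2 (w k) mid)\<bar> \<ge> 1" by linarith
      then show ?thesis using zm e by linarith
    qed
    show False
    proof (cases "rdet z Mid > 0")
      case True
      then have "z \<in> OC U Mid" using zu unfolding OC_def by auto
      then have "z \<in> interior (cone2 (of_iv (w j)) (of_iv (w (Suc j))))"
        using OC_sub_int[OF UMid] unfolding U_def Mid_def u_def mid_def by auto
      moreover have "k mod m \<noteq> j mod m" using kS by auto
      ultimately show False using dj zk by blast
    next
      case False
      then have "rdet z Mid < 0" using sig by linarith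
      then have "z \<in> OC Mid (- U)" using zu unfolding OC_def by (auto simp: rdet_swap[of Mid z] rdet_neg_right rdet_swap[of U z])
      then have "z \<in> interior (cone2 (of_iv (w (Suc j))) (of_iv (w (Suc (Suc j)))))"
        using OC_sub_int[OF MidU] unfolding U_def Mid_def mid_def wjj by (auto simp: of_iv_neg)
      moreover have "k mod m \<noteq> Suc j mod m" using kS by auto
      ultimately show False using dj zk by blast
    qed
  qed
  show ?thesis
  proof (intro allI impI)
    fix l assume lS: "l mod m \<notin> {j mod m, Suc j mod m, Suc (Suc j) mod m}"
    have "det2 u (w l) \<le> 0" using notpos[OF lS] by simp
    moreover have "det2 u (w l) \<noteq> 0"
    proof
      assume l0: "det2 u (w l) = 0"
      define k where "k = l + m - 1"
      have sk: "Suc k mod m = l mod m" unfolding k_def using m by simp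
      then have wsk: "w (Suc k) = w l" using wm by blast
      have "det2 (w k) (w (Suc k)) * det2 u (w (Suc (Suc k))) + det2 (w (Suc k)) (w (Suc (Suc k))) * det2 u (w k)
        + det2 (w (Suc (Suc k))) (w k) * det2 u (w (Suc k)) = 0" by (rule pl1)
      moreover have d1: "det2 (w k) (w (Suc k)) = 1" "det2 (w (Suc k)) (w (Suc (Suc k))) = 1" using dt by blast+
      moreover have l0': "det2 u (w (Suc k)) = 0" using l0 wsk by simp
      ultimately have sum0: "det2 u (w (Suc (Suc k))) + det2 u (w k) = 0" by simp
      have "det2 u (w k) \<noteq> 0"
      proof
        assume a0: "det2 u (w k) = 0"
        have "det2 (w k) u = 0" "det2 (w (Suc k)) u = 0" using a0 l0 wsk det2_swap by (metis neg_equal_0_iff_equal)+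
        moreover have "det2 (- mid) u = 1" using umid by (simp add: det2_def algebra_simps)
        ultimately have "det2 (w k) (w (Suc k)) = 0" using par by blast
        then show False using dt by simp
      qed
      then consider "det2 u (w k) > 0" | "det2 u (w (Suc (Suc k))) > 0" using sum0 by linarith
      then show False
      proof cases
        case 1
        then have "k mod m \<in> {j mod m, Suc j mod m, Suc (Suc j) mod m}" using notpos by blast
        then consider "k mod m = j mod m" | "k mod m = Suc j mod m" | "k mod m = Suc (Suc j) mod m" by blast
        then show False
        proof cases
          case 1 then have "w k = u" using wm unfolding u_def by blast
          then show False using \<open>det2 u (w k) > 0\<close> by (simp add: det2_self)
        next
          case 2 then have "Suc k mod m = Suc (Suc j) mod m" by (rule suc_cong)
          then show False using lS sk by simp
        next
          case 3 then have "w k = - u" using wm wjj by metis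
          then show False using \<open>det2 u (w k) > 0\<close> by (simp add: det2_self det2_neg_right)
        qed
      next
        case 2
        then have "Suc (Suc k) mod m \<in> {j mod m, Suc j mod m, Suc (Suc j) mod m}" using notpos by blast
        then consider "Suc (Suc k) mod m = j mod m" | "Suc (Suc k) mod m = Suc j mod m"
          | "Suc (Suc k) mod m = Suc (Suc j) mod m" by blast
        then show False
        proof cases
          case 1 then have "w (Suc (Suc k)) = u" using wm unfolding u_def by blast
          then show False using \<open>det2 u (w (Suc (Suc k))) > 0\<close> by (simp add: det2_self)
        next
          case 2 then have "Suc k mod m = j mod m" by (rule suc_cancel[OF m])
          then show False using lS sk by simp
        next
          case 3 then have "w (Suc (Suc k)) = - u" using wm wjj by metis
          then show False using \<open>det2 u (w (Suc (Suc k))) > 0\<close> by (simp add: det2_self det2_neg_right)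
        qed
      qed
    qed
    ultimately show "det2 (w j) (w l) < 0" unfolding u_def by simp
  qed
qed


lemma det2_add_right: "det2 u (a + b) = det2 u a + det2 u b" by (simp add: det2_def algebra_simps)
lemma det2_scale_right: "det2 u (s * fst x, s * snd x) = s * det2 u x" by (simp add: det2_def algebra_simps)

lemma heights_contra:
  fixes w :: "nat \<Rightarrow> int \<times> int" and m j :: nat
  assumes m5: "5 \<le> m"
    and dt: "\<forall>k. det2 (w k) (w (Suc k)) = 1"
    and wm: "\<forall>k l. k mod m = l mod m \<longrightarrow> w k = w l"
    and z: "w j + w (Suc (Suc j)) = 0"
    and ev: "\<forall>k. even (det2 (w k) (w (Suc (Suc k))))"
    and neg: "\<forall>k. k mod m \<notin> {j mod m, Suc j mod m, Suc (Suc j) mod m} \<longrightarrow> det2 (w j) (w k) < 0"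
  shows False
proof -
  define u where "u = w j"
  define mid where "mid = w (Suc j)"
  have wjj: "w (Suc (Suc j)) = - u" using z unfolding u_def by (simp add: eq_neg_iff_add_eq_0 add.commute)
  have umid: "det2 u mid = 1" using dt unfolding u_def mid_def by blast
  define c where "c = (\<lambda>i. w (j + 2 + i))"
  define h where "h = (\<lambda>i. - det2 u (c i))"
  have cS: "c (Suc i) = w (Suc (j + 2 + i))" "c (Suc (Suc i)) = w (Suc (Suc (j + 2 + i)))" for i
    unfolding c_def by simp_all
  have h0: "h 0 = 0" unfolding h_def c_def using wjj by (simp add: det2_neg_right det2_self numeral_2_eq_2)
  have hend: "h (m - 2) = 0"
  proof -
    have "j + 2 + (m - 2) = j + m" using m5 by simp
    then have "(j + 2 + (m - 2)) mod m = j mod m" by (simp only: mod_add_self2)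
    then have "c (m - 2) = u" unfolding c_def u_def using wm by blast
    then show ?thesis unfolding h_def by (simp add: det2_self)
  qed
  have hin: "h i \<ge> 1" if "1 \<le> i" "i \<le> m - 3" for i
  proof -
    have "(j + 2 + i) mod m \<notin> {j mod m, Suc j mod m, Suc (Suc j) mod m}"
    proof
      assume "(j + 2 + i) mod m \<in> {j mod m, Suc j mod m, Suc (Suc j) mod m}"
      then have mem: "(j + 2 + i) mod m = (0 + j) mod m \<or> (j + 2 + i) mod m = (1 + j) mod m \<or> (j + 2 + i) mod m = (2 + j) mod m"
        by (simp add: numeral_2_eq_2)
      have A: "(j + 2 + i) mod m = ((2 + i) + j) mod m" by (simp add: ac_simps)
      obtain d where d: "d \<le> 2" "((2 + i) + j) mod m = (d + j) mod m" using mem A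
        by (metis le0 le_add2 one_add_one order_refl)
      have "2 + i = d" by (rule rot_inj[OF d(2)]) (use that m5 d in auto)
      then show False using that d by simp
    qed
    then have "det2 u (c i) < 0" using neg unfolding u_def c_def by blast
    then show ?thesis unfolding h_def by simp
  qed
  have rel: "h i + h (Suc (Suc i)) = det2 (c i) (c (Suc (Suc i))) * h (Suc i)" for i
  proof -
    have "c i + c (Suc (Suc i)) = (det2 (c i) (c (Suc (Suc i))) * fst (c (Suc i)), det2 (c i) (c (Suc (Suc i))) * snd (c (Suc i)))"
      by (rule rel3) (use dt cS in \<open>auto simp: c_def\<close>)
    then have "det2 u (c i + c (Suc (Suc i))) = det2 (c i) (c (Suc (Suc i))) * det2 u (c (Suc i))"
      by (simp add: det2_scale_right)
    then show ?thesis unfolding h_def by (simp add: det2_add_right)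
  qed
  have evc: "even (det2 (c i) (c (Suc (Suc i))))" for i using ev cS by (simp add: c_def)
  define I where "I = {1..m - 3}"
  have I: "finite I" "1 \<in> I" "2 \<in> I" using m5 unfolding I_def by auto
  define H where "H = Max (h ` I)"
  have hle: "h i \<le> H" if "i \<in> I" for i unfolding H_def using I that by auto
  have "H \<in> h ` I" unfolding H_def using I by (intro Max_in) auto
  then obtain i0 where i0: "i0 \<in> I" "h i0 = H" by auto
  have "1 \<le> m - 3" using m5 by simp
  then have H1: "H \<ge> 1" using hle[OF I(2)] hin[of 1] by force
  have hrange: "0 \<le> h i \<and> h i \<le> H" if "i \<le> m - 2" for i
  proof (cases "i = 0 \<or> i = m - 2")
    case True then show ?thesis using h0 hend H1 by auto
  next
    case False then have "i \<in> I" using that unfolding I_def by auto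
    then show ?thesis using hle hin unfolding I_def by force
  qed
  obtain p where p: "i0 = Suc p" using i0 unfolding I_def by (cases i0) auto
  have pm: "Suc (Suc p) \<le> m - 2" "p \<le> m - 2" using i0 p unfolding I_def by auto
  define a where "a = det2 (c p) (c (Suc (Suc p)))"
  have ra: "h p + h (Suc (Suc p)) = a * H" using rel[of p] i0 p unfolding a_def by simp
  have ge1: "h p + h (Suc (Suc p)) \<ge> 1"
  proof (cases "p = 0")
    case True
    then have "Suc (Suc p) \<in> I" using I by (simp add: numeral_2_eq_2)
    then show ?thesis using hin hrange[OF pm(2)] unfolding I_def by force
  next
    case False
    then have "p \<in> I" using i0 p unfolding I_def by auto
    then show ?thesis using hin hrange[OF pm(1)] unfolding I_def by force
  qed
  have "a > 0"
  proof (rule ccontr)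
    assume "\<not> a > 0"
    then have "a * H \<le> 0" using H1 by (simp add: mult_nonpos_nonneg)
    then show False using ra ge1 by simp
  qed
  moreover have "even a" unfolding a_def using evc by blast
  ultimately have a2: "a \<ge> 2" by presburger
  have "a * H \<ge> 2 * H" using a2 H1 by (intro mult_right_mono) auto
  then have hp: "h p = H" "h (Suc (Suc p)) = H" using ra hrange[OF pm(1)] hrange[OF pm(2)] by linarith+
  have "det2 u mid * det2 (c p) (c (Suc p)) = det2 u (c p) * det2 mid (c (Suc p)) - det2 u (c (Suc p)) * det2 mid (c p)"
    by (rule pl2)
  moreover have "det2 (c p) (c (Suc p)) = 1" using dt cS unfolding c_def by simp
  moreover have "det2 u (c p) = - H" "det2 u (c (Suc p)) = - H" using hp i0 p unfolding h_def by auto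
  ultimately have "1 = H * (det2 mid (c p) - det2 mid (c (Suc p)))" using umid by (simp add: algebra_simps)
  then have HH: "H = 1" using H1 by (metis pos_zmult_eq_1_iff zero_less_one order_less_le_trans)
  have "h 1 = 1" "h 2 = 1" using hle[OF I(2)] hle[OF I(3)] hin[of 1] hin[of 2] m5 HH by auto
  moreover have "h 0 + h (Suc (Suc 0)) = det2 (c 0) (c (Suc (Suc 0))) * h (Suc 0)" by (rule rel)
  ultimately have "det2 (c 0) (c (Suc (Suc 0))) = 1" using h0 by (simp add: numeral_2_eq_2)
  then show False using evc[of 0] by simp
qed


lemma no_alt_fan:
  assumes fan: "complete_nonsingular_fan2 m v" and m5: "5 \<le> m"
    and E: "\<forall>k. mod2 (v (k mod m)) = mod2 (v (Suc (Suc k) mod m))"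
    and NZ: "\<forall>i<m. fst (mod2 (v i)) \<or> snd (mod2 (v i))"
  shows False
proof -
  note F = fan_props[OF fan]
  have m0: "0 < m" using m5 by simp
  define w where "w = (\<lambda>k. v (k mod m))"
  have wS: "w (Suc k) = v (Suc (k mod m) mod m)" for k unfolding w_def by (simp add: mod_Suc_eq)
  have dt: "\<forall>k. det2 (w k) (w (Suc k)) = 1"
    using F(3) m0 unfolding wS by (simp add: w_def)
  have wm: "\<forall>k l. k mod m = l mod m \<longrightarrow> w k = w l" unfolding w_def by simp
  have Ck: "cone2 (of_iv (w k)) (of_iv (w (Suc k))) = Cn v m (k mod m)" for k
    unfolding Cn_def wS by (simp add: w_def)
  have dj: "\<forall>k l. k mod m \<noteq> l mod m \<longrightarrow>
       interior (cone2 (of_iv (w k)) (of_iv (w (Suc k)))) \<inter> interior (cone2 (of_iv (w l)) (of_iv (w (Suc l)))) = {}"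
    unfolding Ck using F(5) m0 by simp
  have relw: "w k + w (Suc (Suc k)) = (det2 (w k) (w (Suc (Suc k))) * fst (w (Suc k)), det2 (w k) (w (Suc (Suc k))) * snd (w (Suc k)))" for k
    by (rule rel3) (use dt in auto)
  have ev: "\<forall>k. even (det2 (w k) (w (Suc (Suc k))))"
  proof
    fix k
    show "even (det2 (w k) (w (Suc (Suc k))))"
    proof (rule even_coef[OF _ _ relw])
      show "mod2 (w k) = mod2 (w (Suc (Suc k)))" using E unfolding w_def by simp
      show "fst (mod2 (w (Suc k))) \<or> snd (mod2 (w (Suc k)))" using NZ m0 unfolding w_def by simp
    qed
  qed
  have "\<exists>j1<m. \<forall>k<m. N2 (v k) \<le> N2 (v j1)"
  proof -
    have "Max ((\<lambda>k. N2 (v k)) ` {..<m}) \<in> (\<lambda>k. N2 (v k)) ` {..<m}" using m0 by (intro Max_in) auto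
    then obtain j1 where "j1 < m" "N2 (v j1) = Max ((\<lambda>k. N2 (v k)) ` {..<m})" by auto
    then show ?thesis by (metis Max_ge finite_imageI finite_lessThan image_eqI lessThan_iff)
  qed
  then obtain j1 where j1: "j1 < m" "\<forall>k<m. N2 (v k) \<le> N2 (v j1)" by blast
  define j where "j = j1 + m - 1"
  have wsj: "w (Suc j) = v j1" unfolding w_def j_def using m0 j1(1) by simp
  have Nle: "N2 (w k) \<le> N2 (w (Suc j))" for k unfolding wsj using j1(2) m0 unfolding w_def by simp
  define a where "a = det2 (w j) (w (Suc (Suc j)))"
  have z: "w j + w (Suc (Suc j)) = 0"
  proof (cases "a = 0")
    case True then show ?thesis using relw[of j] unfolding a_def by (simp add: zero_prod_def)
  next
    case False
    have "even a" using ev unfolding a_def by blast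
    then have "\<bar>a\<bar> \<ge> 2" using False by presburger
    then have "(2::int) ^ 2 \<le> \<bar>a\<bar> ^ 2" by (intro power_mono) auto
    then have a4: "a ^ 2 \<ge> 4" by simp
    have Nb: "N2 (w (Suc j)) \<ge> 0" unfolding N2_def by simp
    have "N2 (w j + w (Suc (Suc j))) = a ^ 2 * N2 (w (Suc j))" using relw[of j] unfolding a_def by (simp add: N2_scale)
    moreover have "a ^ 2 * N2 (w (Suc j)) \<ge> 4 * N2 (w (Suc j))" using a4 Nb by (intro mult_right_mono) auto
    moreover have "N2 (w j + w (Suc (Suc j))) + N2 (w j - w (Suc (Suc j))) = 2 * N2 (w j) + 2 * N2 (w (Suc (Suc j)))"
      by (rule N2_para)
    moreover note Nle[of j] Nle[of "Suc (Suc j)"]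
    ultimately have "N2 (w j - w (Suc (Suc j))) \<le> 0" by linarith
    then have "w j - w (Suc (Suc j)) = 0" by (rule N2_zero)
    then have "w j = w (Suc (Suc j))" by simp
    then have "det2 (w (Suc j)) (w (Suc (Suc j))) = - det2 (w j) (w (Suc j))" by (simp add: det2_swap[of "w (Suc j)"])
    then show ?thesis using dt by simp
  qed
  have neg: "\<forall>k. k mod m \<notin> {j mod m, Suc j mod m, Suc (Suc j) mod m} \<longrightarrow> det2 (w j) (w k) < 0"
    by (rule halfplane[OF m0 dt dj wm z])
  show False by (rule heights_contra[OF m5 dt wm z ev neg])
qed



lemma gl_inj0: "(p \<and> s) \<noteq> (q \<and> r) \<Longrightarrow> z2lin p q r s (a, b) = z2lin p q r s (c, d) \<Longrightarrow> a = c \<and> b = d"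
  by (cases p; cases q; cases r; cases s; cases a; cases b; cases c; cases d) (simp_all add: z2lin_def)

lemma gl_inj:
  assumes "g \<in> GL2Z2" "g x = g y" shows "x = y"
proof -
  obtain p q r s where g: "g = z2lin p q r s" "(p \<and> s) \<noteq> (q \<and> r)" using assms(1) unfolding GL2Z2_def by blast
  obtain a b c d where xy: "x = (a, b)" "y = (c, d)" by (cases x, cases y) auto
  show ?thesis using gl_inj0[OF g(2)] assms(2) g(1) xy by simp
qed

lemma gl_nz0: "(p \<and> s) \<noteq> (q \<and> r) \<Longrightarrow> x \<in> {va, vb, vc} \<Longrightarrow> fst (z2lin p q r s x) \<or> snd (z2lin p q r s x)"
  by (cases p; cases q; cases r; cases s) (auto simp: z2lin_def va_def vb_def vc_def)

lemma gl_nz: "g \<in> GL2Z2 \<Longrightarrow> x \<in> {va, vb, vc} \<Longrightarrow> fst (g x) \<or> snd (g x)"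
proof -
  assume a: "g \<in> GL2Z2" "x \<in> {va, vb, vc}"
  obtain p q r s where g: "g = z2lin p q r s" "(p \<and> s) \<noteq> (q \<and> r)" using a(1) unfolding GL2Z2_def by blast
  show ?thesis using gl_nz0[OF g(2) a(2)] g(1) by simp
qed


lemma z2lin_GL: "(p \<and> s) \<noteq> (q \<and> r) \<Longrightarrow> z2lin p q r s \<in> GL2Z2"
  unfolding GL2Z2_def by (intro CollectI exI[of _ p] exI[of _ q] exI[of _ r] exI[of _ s]) simp

lemma id_gl: "(\<lambda>x. x) \<in> GL2Z2"
proof -
  have "z2lin True False False True = (\<lambda>x. x)" unfolding z2lin_def by auto
  then show ?thesis using z2lin_GL[of True True False False] by simp
qed

lemma gp: "(p \<and> s) \<noteq> (q \<and> r) \<Longrightarrow> z2lin p q r s x = va \<Longrightarrow> z2lin p q r s y = vb \<Longrightarrow> \<exists>g\<in>GL2Z2. g x = va \<and> g y = vb"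
  by (intro bexI[of _ "z2lin p q r s"] conjI z2lin_GL)

lemma gl_pair: "x \<in> {va, vb, vc} \<Longrightarrow> y \<in> {va, vb, vc} \<Longrightarrow> x \<noteq> y \<Longrightarrow> \<exists>g\<in>GL2Z2. g x = va \<and> g y = vb"
proof -
  assume h: "x \<in> {va, vb, vc}" "y \<in> {va, vb, vc}" "x \<noteq> y"
  have ab: "va \<noteq> vb" "vb \<noteq> vc" "va \<noteq> vc" by (auto simp: va_def vb_def vc_def)
  consider "x = va" "y = vb" | "x = va" "y = vc" | "x = vb" "y = va" | "x = vb" "y = vc" | "x = vc" "y = va" | "x = vc" "y = vb"
    using h by blast
  then show ?thesis
  proof cases
    case 1 then show ?thesis by (intro gp[of True True False False]) (simp_all add: z2lin_def va_def vb_def vc_def)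
  next
    case 2 then show ?thesis by (intro gp[of True True True False]) (simp_all add: z2lin_def va_def vb_def vc_def)
  next
    case 3 then show ?thesis by (intro gp[of False False True True]) (simp_all add: z2lin_def va_def vb_def vc_def)
  next
    case 4 then show ?thesis by (intro gp[of True False True True]) (simp_all add: z2lin_def va_def vb_def vc_def)
  next
    case 5 then show ?thesis by (intro gp[of False True True True]) (simp_all add: z2lin_def va_def vb_def vc_def)
  next
    case 6 then show ?thesis by (intro gp[of True True False True]) (simp_all add: z2lin_def va_def vb_def vc_def)
  qed
qed

lemma all4: "(\<forall>i<(4::nat). P i) \<longleftrightarrow> P 0 \<and> P 1 \<and> P 2 \<and> P 3"
  unfolding lt4 by auto

lemma alt_mod4: "\<forall>i<4. mod2 (v4 i) = alt_ab i"
  unfolding all4 by (simp add: v4_def mod2_def alt_ab_def va_def vb_def)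

lemma real_toric_3:
  assumes "3 \<le> m" "char_map m lam" "card (lam ` {..<m}) = 3"
  shows "real_toric m lam"
proof -
  obtain v where v: "complete_nonsingular_fan2 m v" "\<forall>i<m. mod2 (v i) = lam i"
    using construct[OF assms] by blast
  have "dj_equiv m lam (\<lambda>i. mod2 (v i))" unfolding dj_equiv_def using id_gl v(2) by force
  then show ?thesis unfolding real_toric_def using v(1) by blast
qed

lemma real_toric_4:
  assumes "dj_equiv 4 lam alt_ab"
  shows "real_toric 4 lam"
proof -
  obtain g where g: "g \<in> GL2Z2" "\<forall>i<4. alt_ab i = g (lam i)" using assms unfolding dj_equiv_def by blast
  have "dj_equiv 4 lam (\<lambda>i. mod2 (v4 i))" unfolding dj_equiv_def using g alt_mod4 by auto
  then show ?thesis unfolding real_toric_def using fan_v4 by blast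
qed

lemma cm_last:
  assumes "char_map m lam" "3 \<le> m"
  shows "lam (m - 1) \<noteq> lam 0" "lam 0 \<noteq> lam 1"
proof -
  have "m - 1 < m" "Suc (m - 1) mod m = 0" using assms(2) by auto
  then show "lam (m - 1) \<noteq> lam 0" using assms(1) unfolding char_map_def by metis
  have "0 < m" "Suc 0 mod m = 1" using assms(2) by auto
  then show "lam 0 \<noteq> lam 1" using assms(1) unfolding char_map_def by metis
qed

lemma dj_even:
  assumes "char_map m lam" "3 \<le> m" "dj_equiv m lam alt_ab"
  shows "even m"
proof (rule ccontr)
  assume o: "odd m"
  obtain g where g: "g \<in> GL2Z2" "\<forall>i<m. alt_ab i = g (lam i)" using assms(3) unfolding dj_equiv_def by blast
  have "even (m - 1)" using o assms(2) by simp
  then have "alt_ab (m - 1) = alt_ab 0" unfolding alt_ab_def by simp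
  then have "g (lam (m - 1)) = g (lam 0)" using g(2) assms(2) by (metis diff_less less_le_trans numeral_3_eq_3 zero_less_Suc zero_less_one)
  then show False using gl_inj[OF g(1)] cm_last[OF assms(1,2)] by blast
qed

lemma dj_card:
  assumes "char_map m lam" "3 \<le> m" "dj_equiv m lam alt_ab"
  shows "card (lam ` {..<m}) \<noteq> 3"
proof -
  obtain g where g: "g \<in> GL2Z2" "\<forall>i<m. alt_ab i = g (lam i)" using assms(3) unfolding dj_equiv_def by blast
  have "lam ` {..<m} \<subseteq> {lam 0, lam 1}"
  proof
    fix x assume "x \<in> lam ` {..<m}"
    then obtain i where i: "i < m" "x = lam i" by auto
    have "alt_ab 0 = g (lam 0)" "alt_ab 1 = g (lam 1)" using g(2) assms(2) by auto
    then have g01: "g (lam 0) = va" "g (lam 1) = vb" by (auto simp: alt_ab_def)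
    have "alt_ab i = g (lam i)" using g(2) i(1) by auto
    then have "g (lam i) = va \<or> g (lam i) = vb" by (auto simp: alt_ab_def split: if_splits)
    then have "g (lam i) = g (lam 0) \<or> g (lam i) = g (lam 1)" using g01 by simp
    then have "lam i = lam 0 \<or> lam i = lam 1" using gl_inj[OF g(1)] by blast
    then show "x \<in> {lam 0, lam 1}" using i by simp
  qed
  then have "card (lam ` {..<m}) \<le> card {lam 0, lam 1}" by (intro card_mono) auto
  also have "\<dots> \<le> 2" by (simp add: card_insert_le_m1)
  finally show ?thesis by simp
qed

lemma card_dj:
  assumes "char_map m lam" "3 \<le> m" "card (lam ` {..<m}) \<noteq> 3"
  shows "dj_equiv m lam alt_ab"
proof -
  have R: "\<forall>i<m. lam i \<in> {va, vb, vc}" and A: "\<forall>i<m. lam i \<noteq> lam (Suc i mod m)"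
    using assms(1) unfolding char_map_def by auto
  have l01: "lam 0 \<noteq> lam 1" using cm_last[OF assms(1,2)] by blast
  have sub: "lam i \<in> {lam 0, lam 1}" if "i < m" for i
  proof (rule ccontr)
    assume "lam i \<notin> {lam 0, lam 1}"
    then have c3: "card {lam 0, lam 1, lam i} = 3" using l01 by auto
    have s1: "{lam 0, lam 1, lam i} \<subseteq> lam ` {..<m}" using that assms(2) by auto
    have s2: "lam ` {..<m} \<subseteq> {va, vb, vc}" using R by auto
    have "card {lam 0, lam 1, lam i} \<le> card (lam ` {..<m})" by (rule card_mono[OF _ s1]) simp
    moreover have "card (lam ` {..<m}) \<le> card {va, vb, vc}" by (rule card_mono[OF _ s2]) simp
    moreover have "card {va, vb, vc} \<le> 3" by (simp add: card_insert_if)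
    ultimately have "card (lam ` {..<m}) = 3" using c3 by linarith
    then show False using assms(3) by simp
  qed
  have alt: "lam i = (if even i then lam 0 else lam 1)" if "i < m" for i
    using that
  proof (induction i)
    case 0 then show ?case by simp
  next
    case (Suc i)
    then have "lam (Suc i) \<noteq> lam i" using A by (metis Suc_lessD mod_less)
    moreover have "lam (Suc i) \<in> {lam 0, lam 1}" using sub Suc by blast
    ultimately show ?case using Suc by (auto split: if_splits)
  qed
  obtain g where g: "g \<in> GL2Z2" "g (lam 0) = va" "g (lam 1) = vb"
    using gl_pair[of "lam 0" "lam 1"] R assms(2) l01 by auto
  have "\<forall>i<m. alt_ab i = g (lam i)"
  proof (intro allI impI)
    fix i assume i: "i < m"
    show "alt_ab i = g (lam i)"
    proof (cases "even i")
      case True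
      then have "lam i = lam 0" using alt[OF i] by simp
      then show ?thesis using True g(2) unfolding alt_ab_def by simp
    next
      case False
      then have "lam i = lam 1" using alt[OF i] by simp
      then show ?thesis using False g(3) unfolding alt_ab_def by simp
    qed
  qed
  then show ?thesis unfolding dj_equiv_def using g(1) by blast
qed

lemma dj_not_toric:
  assumes "char_map m lam" "m = 2 * k" "3 \<le> k" "dj_equiv m lam alt_ab"
  shows "\<not> real_toric m lam"
proof
  assume "real_toric m lam"
  then obtain v h where v: "complete_nonsingular_fan2 m v" "h \<in> GL2Z2" "\<forall>i<m. mod2 (v i) = h (lam i)"
    unfolding real_toric_def dj_equiv_def by blast
  obtain g where g: "g \<in> GL2Z2" "\<forall>i<m. alt_ab i = g (lam i)" using assms(4) unfolding dj_equiv_def by blast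
  have m0: "0 < m" "even m" using assms by auto
  have R: "\<forall>i<m. lam i \<in> {va, vb, vc}" using assms(1) unfolding char_map_def by auto
  show False
  proof (rule no_alt_fan[OF v(1)])
    show "5 \<le> m" using assms by simp
    show "\<forall>k. mod2 (v (k mod m)) = mod2 (v (Suc (Suc k) mod m))"
    proof
      fix k
      have par: "even (k mod m) \<longleftrightarrow> even (Suc (Suc k) mod m)"
        using dvd_mod_iff[of 2 m k] dvd_mod_iff[of 2 m "Suc (Suc k)"] m0(2) by simp
      have "alt_ab (k mod m) = alt_ab (Suc (Suc k) mod m)" unfolding alt_ab_def using par by simp
      then have "g (lam (k mod m)) = g (lam (Suc (Suc k) mod m))" using g(2) m0(1) by simp
      then have "lam (k mod m) = lam (Suc (Suc k) mod m)" using gl_inj[OF g(1)] by blast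
      then show "mod2 (v (k mod m)) = mod2 (v (Suc (Suc k) mod m))" using v(3) m0(1) by simp
    qed
    show "\<forall>i<m. fst (mod2 (v i)) \<or> snd (mod2 (v i))" using v(3) gl_nz[OF v(2)] R by simp
  qed
qed

theorem lemma5:
  fixes m :: nat and lam :: "nat \<Rightarrow> z2vec"
  assumes "m \<ge> 3" and "char_map m lam"
  shows "(real_toric m lam \<longleftrightarrow>
            ((m = 4 \<and> dj_equiv m lam alt_ab) \<or> card (lam ` {..<m}) = 3))
       \<and> (real_toric m lam \<longleftrightarrow>
            \<not> (\<exists>k\<ge>3. m = 2 * k \<and> dj_equiv m lam alt_ab))"
proof -
  have T1: "card (lam ` {..<m}) = 3 \<Longrightarrow> real_toric m lam" using real_toric_3 assms by blast
  have T2: "m = 4 \<Longrightarrow> dj_equiv m lam alt_ab \<Longrightarrow> real_toric m lam" using real_toric_4 by blast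
  have T3: "m = 2 * k \<Longrightarrow> 3 \<le> k \<Longrightarrow> dj_equiv m lam alt_ab \<Longrightarrow> \<not> real_toric m lam" for k
    using dj_not_toric assms(2) by blast
  have F4: "card (lam ` {..<m}) = 3 \<longleftrightarrow> \<not> dj_equiv m lam alt_ab"
    using dj_card card_dj assms by blast
  have F5: "dj_equiv m lam alt_ab \<Longrightarrow> m = 4 \<or> (\<exists>k\<ge>3. m = 2 * k)"
  proof -
    assume "dj_equiv m lam alt_ab"
    then have "even m" using dj_even assms by blast
    then obtain k where "m = 2 * k" by blast
    then show ?thesis using assms(1) by (cases "k \<ge> 3") auto
  qed
  show ?thesis
  proof (intro conjI iffI)
    assume t: "real_toric m lam"
    show "(m = 4 \<and> dj_equiv m lam alt_ab) \<or> card (lam ` {..<m}) = 3"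
    proof (cases "dj_equiv m lam alt_ab")
      case True
      then have "m = 4" using F5 T3 t by blast
      then show ?thesis using True by simp
    next
      case False then show ?thesis using F4 by simp
    qed
  next
    assume "(m = 4 \<and> dj_equiv m lam alt_ab) \<or> card (lam ` {..<m}) = 3"
    then show "real_toric m lam" using T1 T2 by blast
  next
    assume t: "real_toric m lam"
    show "\<not> (\<exists>k\<ge>3. m = 2 * k \<and> dj_equiv m lam alt_ab)" using T3 t by blast
  next
    assume n: "\<not> (\<exists>k\<ge>3. m = 2 * k \<and> dj_equiv m lam alt_ab)"
    show "real_toric m lam"
    proof (cases "dj_equiv m lam alt_ab")
      case True
      then have "m = 4" using F5 n by blast
      then show ?thesis using T2 True by blast
    next
      case False then show ?thesis using F4 T1 by simp
    qed
  qed
qed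


end
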